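(* Let $\Lambda$ be a recursive $\varepsilon$-number and $\mathcal{H}$ as in the context. For every $x\in H$ there is a formula $\varphi\in\mathbb{F}$ such that $\mathcal{H},x\Vdash\varphi$ and $\mathcal{H},y\not\Vdash\varphi$ for every $y\in x^\downarrow$.
   Context: Fix a recursive ordinal $\Lambda$ that is an $\varepsilon$-number ($\omega^\Lambda=\Lambda$). Formulas: $\mathbb{F}$ is the smallest set containing $\top$, closed under $\wedge$, and such that if $\varphi\in\mathbb{F}$, $n<\omega$, $\alpha<\Lambda$ then $\langle n^\alpha\rangle\varphi\in\mathbb{F}$. Ordinal logarithm: $\ell(0)=0$, $\ell(\alpha+\omega^\beta)=\beta$; an $\ell$-sequence is an $\omega$-sequence of ordinals $x=\langle x_0,x_1,\dots\rangle$ with $x_{i+1}\le\ell(x_i)$ for all $i$; $H$ is the set of $\ell$-sequences all of whose entries are $<\Lambda$ and some entry of which is $0$. For $n<\omega$, $xS_ny$ iff $x_m>y_m$ for all $m\le n$ and $x_i\ge y_i$ for all $i>n$. $xS_n^0y$ iff $x=y$; $xS_n^{1+\alpha}y$ iff for every $\beta<1+\alpha$ there is $z\in H$ with $xS_nz$ and $zS_n^\beta y$. The model $\mathcal{H}=\langle H,\{S_n\}_{n<\omega}\rangle$ has forcing: $x\Vdash\top$ always; $x\Vdash\varphi\wedge\psi$ iff $x\Vdash\varphi$ and $x\Vdash\psi$; $x\Vdash\langle n^\alpha\rangle\varphi$ iff there is $y\in H$ with $xS_n^\alpha y$ and $y\Vdash\varphi$. For $x\in H$, $x^\downarrow$ is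 the set of $y\in H$ such that $y_j<x_j$ for some $j<\omega$. *)

theory Defs
  imports Main "HOL-Library.Countable_Set"
begin

text \<open>The ordinals below \<Lambda> are represented by the elements of a well-ordered
type 'a whose order type is \<Lambda>. Ordinal notions are defined order-theoretically.\<close>

definition ozero :: "'a::wellorder" where
  "ozero = (LEAST z. True)"

definition oiso :: "'a::wellorder set \<Rightarrow> 'b::wellorder set \<Rightarrow> bool" where
  "oiso A B \<longleftrightarrow> (\<exists>f. bij_betw f A B \<and> (\<forall>u\<in>A. \<forall>v\<in>A. u < v \<longrightarrow> f u < f v))"

text \<open>additively principal ordinals (the ordinals of the form \<omega>^\<beta>):
  p > 0 and \<xi> + p = p for all \<xi> < p, i.e. the interval [\<xi>,p) has order type p\<close>
definition addprin :: "'a::wellorder \<Rightarrow> bool" where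
  "addprin p \<longleftrightarrow> ozero < p \<and> (\<forall>a. a < p \<longrightarrow> oiso {z. a \<le> z \<and> z < p} {z. z < p})"

text \<open>ordinal logarithm: ell 0 = 0, ell (\<gamma> + \<omega>^\<beta>) = \<beta>.  Here \<gamma> + \<pi> = a means that
  [\<gamma>,a) has order type \<pi>, and \<pi> = \<omega>^\<beta> means that \<pi> is additively principal and
  \<beta> is the order type of the set of additively principal ordinals below \<pi>.\<close>
definition ell :: "'a::wellorder \<Rightarrow> 'a" where
  "ell a = (if a = ozero then ozero else
     (THE b. \<exists>g (p::'a). g \<le> a \<and> addprin p \<and> oiso {z. g \<le> z \<and> z < a} {z. z < p}
                 \<and> oiso {z. z < b} {q. addprin q \<and> q < p}))"

text \<open>\<Lambda> (the order type of 'a) is an epsilon number: the additively principal ordinals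
  below \<Lambda> are cofinal in \<Lambda> and have order type \<Lambda> (equivalently \<omega>^\<Lambda> = \<Lambda>).\<close>
definition eps_number_type :: "'a::wellorder itself \<Rightarrow> bool" where
  "eps_number_type T \<longleftrightarrow>
     oiso {p::'a. addprin p} (UNIV :: 'a set) \<and> (\<forall>a::'a. \<exists>p. addprin p \<and> a < p)"

definition lseq :: "(nat \<Rightarrow> 'a::wellorder) \<Rightarrow> bool" where
  "lseq x \<longleftrightarrow> (\<forall>i. x (Suc i) \<le> ell (x i))"

definition Hset :: "(nat \<Rightarrow> 'a::wellorder) set" where
  "Hset = {x. lseq x \<and> (\<exists>i. x i = ozero)}"

definition Srel :: "nat \<Rightarrow> (nat \<Rightarrow> 'a::wellorder) \<Rightarrow> (nat \<Rightarrow> 'a) \<Rightarrow> bool" where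
  "Srel n x y \<longleftrightarrow> (\<forall>m\<le>n. x m > y m) \<and> (\<forall>i>n. x i \<ge> y i)"

definition SrelPow :: "nat \<Rightarrow> 'a::wellorder \<Rightarrow> (nat \<Rightarrow> 'a) \<Rightarrow> (nat \<Rightarrow> 'a) \<Rightarrow> bool" where
  "SrelPow n = wfrec {(b, a). b < a}
     (\<lambda>R \<alpha> x y. if \<alpha> = ozero then x = y
                else (\<forall>\<beta>. \<beta> < \<alpha> \<longrightarrow> (\<exists>z\<in>Hset. Srel n x z \<and> R \<beta> z y)))"

datatype 'a fm = Top | Conj "'a fm" "'a fm" | Dia nat 'a "'a fm"

fun forces :: "(nat \<Rightarrow> 'a::wellorder) \<Rightarrow> 'a fm \<Rightarrow> bool" where
  "forces x Top = True"
| "forces x (Conj \<phi> \<psi>) = (forces x \<phi> \<and> forces x \<psi>)"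
| "forces x (Dia n \<alpha> \<phi>) = (\<exists>y\<in>Hset. SrelPow n \<alpha> x y \<and> forces y \<phi>)"

definition down :: "(nat \<Rightarrow> 'a::wellorder) \<Rightarrow> (nat \<Rightarrow> 'a) set" where
  "down x = {y\<in>Hset. \<exists>j. y j < x j}"

end

theory Submission
  imports Defs
begin



lemma wfless: "wf {(b, a::'a::wellorder). b < a}"
  by (rule wellorder_class.wf)

lemma SrelPow_eq: "SrelPow n \<alpha> x y = (if \<alpha> = ozero then x = y
   else (\<forall>\<beta>. \<beta> < \<alpha> \<longrightarrow> (\<exists>z\<in>Hset. Srel n x z \<and> SrelPow n \<beta> z y)))"
  unfolding SrelPow_def
  by (subst wfrec[OF wfless]) (simp add: cut_def)

lemma ozero_le[simp]: "ozero \<le> (z::'a::wellorder)"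
  by (simp add: ozero_def Least_le)

lemma not_less_ozero[simp]: "\<not> (z::'a::wellorder) < ozero"
  using ozero_le not_le by blast

lemma ell_ozero[simp]: "ell ozero = ozero"
  by (simp add: ell_def)

definition isoon :: "('a::wellorder \<Rightarrow> 'b::wellorder) \<Rightarrow> 'a set \<Rightarrow> 'b set \<Rightarrow> bool" where
  "isoon f A B \<longleftrightarrow> bij_betw f A B \<and> (\<forall>u\<in>A. \<forall>v\<in>A. u < v \<longrightarrow> f u < f v)"

lemma oiso_iff: "oiso A B \<longleftrightarrow> (\<exists>f. isoon f A B)"
  by (simp add: oiso_def isoon_def)

lemma isoon_less_iff: "isoon f A B \<Longrightarrow> u \<in> A \<Longrightarrow> v \<in> A \<Longrightarrow> f u < f v \<longleftrightarrow> u < v"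
  unfolding isoon_def by (metis less_asym neqE)

lemma isoon_le_iff: "isoon f A B \<Longrightarrow> u \<in> A \<Longrightarrow> v \<in> A \<Longrightarrow> f u \<le> f v \<longleftrightarrow> u \<le> v"
  using isoon_less_iff[of f A B v u] by (simp add: not_less[symmetric])

lemma isoon_image: "isoon f A B \<Longrightarrow> f ` A = B"
  unfolding isoon_def by (simp add: bij_betw_def)

lemma isoon_restrict: "isoon f A B \<Longrightarrow> A' \<subseteq> A \<Longrightarrow> isoon f A' (f ` A')"
  unfolding isoon_def by (meson bij_betw_subset subsetD)

lemma isoon_inv: "isoon f A B \<Longrightarrow> isoon (the_inv_into A f) B A"
proof -
  assume h: "isoon f A B"
  have b: "bij_betw (the_inv_into A f) B A"
    using h unfolding isoon_def by (simp add: bij_betw_the_inv_into)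
  moreover have "\<forall>u\<in>B. \<forall>v\<in>B. u < v \<longrightarrow> the_inv_into A f u < the_inv_into A f v"
  proof (intro ballI impI)
    fix u v assume u: "u \<in> B" and v: "v \<in> B" and uv: "u < v"
    have i: "inj_on f A" using h unfolding isoon_def bij_betw_def by simp
    have iu: "the_inv_into A f u \<in> A" "the_inv_into A f v \<in> A"
      using b u v by (auto simp: bij_betw_def)
    have "f (the_inv_into A f u) = u" "f (the_inv_into A f v) = v"
      using h u v i by (auto simp: f_the_inv_into_f isoon_image[OF h, symmetric])
    then show "the_inv_into A f u < the_inv_into A f v"
      using isoon_less_iff[OF h iu] uv by simp
  qed
  ultimately show ?thesis unfolding isoon_def by simp
qed

lemma isoon_comp: "isoon f A B \<Longrightarrow> isoon g B C \<Longrightarrow> isoon (g \<circ> f) A C"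
  unfolding isoon_def
  by (auto intro: bij_betw_trans comp_inj_on simp: bij_betw_def)

lemma oiso_sym: "oiso A B \<Longrightarrow> oiso B A"
  by (meson isoon_inv oiso_iff)

lemma oiso_trans: "oiso A B \<Longrightarrow> oiso B C \<Longrightarrow> oiso A C"
  by (meson isoon_comp oiso_iff)

lemma infl:
  fixes f :: "'a::wellorder \<Rightarrow> 'a"
  assumes mono: "\<forall>u v. u \<in> D \<longrightarrow> v \<in> D \<longrightarrow> u < v \<longrightarrow> f u < f v"
    and down: "\<forall>u v. u \<in> D \<longrightarrow> v < u \<longrightarrow> v \<in> D"
  shows "u \<in> D \<Longrightarrow> u \<le> f u"
proof (induction u rule: less_induct)
  case (less u)
  show ?case
  proof (rule ccontr)
    assume "\<not> u \<le> f u"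
    then have fu: "f u < u" by simp
    have fD: "f u \<in> D" using down less.prems fu by blast
    have "f u \<le> f (f u)" using less.IH[OF fu fD] .
    moreover have "f (f u) < f u" using mono fD less.prems fu by blast
    ultimately show False by simp
  qed
qed

lemma init_le:
  fixes f :: "'a::wellorder \<Rightarrow> 'a"
  assumes "\<forall>u v. u < p \<longrightarrow> v < p \<longrightarrow> u < v \<longrightarrow> f u < f v"
    and "\<forall>u. u < p \<longrightarrow> f u < q"
  shows "p \<le> q"
proof (rule ccontr)
  assume "\<not> p \<le> q"
  then have qp: "q < p" by simp
  have "q \<le> f q"
    apply (rule infl[of "{z. z < p}"])
    using assms qp by auto
  moreover have "f q < q" using assms(2) qp by blast
  ultimately show False by simp
qed

lemma init_unique:
  fixes p q :: "'a::wellorder"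
  assumes "oiso {z. z < p} {z. z < q}"
  shows "p = q"
proof -
  obtain f where f: "isoon f {z. z < p} {z. z < q}" using assms oiso_iff by blast
  have g: "isoon (the_inv_into {z. z < p} f) {z. z < q} {z. z < p}" using isoon_inv[OF f] .
  have "p \<le> q"
    apply (rule init_le[of p f])
    using f isoon_image[OF f] unfolding isoon_def by auto
  moreover have "q \<le> p"
    apply (rule init_le[of q "the_inv_into {z. z < p} f"])
    using g isoon_image[OF g] unfolding isoon_def by auto
  ultimately show ?thesis by simp
qed



definition enum :: "'a::wellorder set \<Rightarrow> 'a \<Rightarrow> 'a" where
  "enum S = wfrec {(b, a). b < a} (\<lambda>R u. LEAST s. s \<in> S \<and> (\<forall>v. v < u \<longrightarrow> R v < s))"

lemma enum_eq: "enum S u = (LEAST s. s \<in> S \<and> (\<forall>v. v < u \<longrightarrow> enum S v < s))"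
  unfolding enum_def
  by (subst wfrec[OF wfless]) (simp add: cut_def)

definition good :: "'a::wellorder set \<Rightarrow> 'a \<Rightarrow> bool" where
  "good S u \<longleftrightarrow> (\<exists>s\<in>S. \<forall>v. v < u \<longrightarrow> enum S v < s)"

lemma good_enum: "good S u \<Longrightarrow> enum S u \<in> S \<and> (\<forall>v. v < u \<longrightarrow> enum S v < enum S u)"
  unfolding good_def
  by (subst (1 2) enum_eq, rule LeastI_ex) blast

lemma good_down: "good S u \<Longrightarrow> v < u \<Longrightarrow> good S v"
  unfolding good_def by (meson less_trans)

lemma type_exists:
  fixes S :: "'a::wellorder set"
  assumes "S \<subseteq> {z. z < a}"
  shows "\<exists>t\<le>a. oiso {z. z < t} S"
proof -
  let ?D = "{u. good S u}"
  have mono: "\<forall>u v. u \<in> ?D \<longrightarrow> v \<in> ?D \<longrightarrow> u < v \<longrightarrow> enum S u < enum S v"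
    using good_enum by blast
  have notga: "\<not> good S a"
  proof
    assume ga: "good S a"
    have "a \<le> enum S a"
      apply (rule infl[of ?D])
      using mono good_down ga by auto
    moreover have "enum S a < a" using good_enum[OF ga] assms by blast
    ultimately show False by simp
  qed
  define t where "t = (LEAST u. \<not> good S u)"
  have tnot: "\<not> good S t" unfolding t_def using notga by (rule LeastI)
  have ta: "t \<le> a" unfolding t_def using notga by (rule Least_le)
  have Dt: "good S u \<longleftrightarrow> u < t" for u
  proof
    assume "good S u" then show "u < t" using tnot good_down by (metis not_less_iff_gr_or_eq)
  next
    assume "u < t" then show "good S u" unfolding t_def using not_less_Least by blast
  qed
  have "isoon (enum S) {z. z < t} S"
    unfolding isoon_def bij_betw_def
  proof (intro conjI ballI impI)
    show "inj_on (enum S) {z. z < t}"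
      unfolding inj_on_def using mono Dt by (metis mem_Collect_eq neqE less_asym)
    have "enum S ` {z. z < t} \<subseteq> S" using good_enum Dt by blast
    moreover have "S \<subseteq> enum S ` {z. z < t}"
    proof
      fix s assume s: "s \<in> S"
      show "s \<in> enum S ` {z. z < t}"
      proof (cases "\<exists>u. u < t \<and> s \<le> enum S u")
        case True
        define u0 where "u0 = (LEAST u. u < t \<and> s \<le> enum S u)"
        have u0: "u0 < t \<and> s \<le> enum S u0" unfolding u0_def using True by (rule LeastI_ex)
        have below: "enum S v < s" if "v < u0" for v
        proof -
          have "\<not> (v < t \<and> s \<le> enum S v)" using that unfolding u0_def using not_less_Least by blast
          then show ?thesis using that u0 by (meson less_trans not_le)
        qed
        have "(LEAST s'. s' \<in> S \<and> (\<forall>v. v < u0 \<longrightarrow> enum S v < s')) \<le> s"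
          by (rule Least_le) (use s below in blast)
        then have "enum S u0 \<le> s" by (subst enum_eq)
        then have "enum S u0 = s" using u0 by simp
        then show ?thesis using u0 by blast
      next
        case False
        then have "good S t" unfolding good_def using s by (meson not_le)
        then show ?thesis using tnot by simp
      qed
    qed
    ultimately show "enum S ` {z. z < t} = S" by blast
  next
    fix u v assume "u \<in> {z. z < t}" "v \<in> {z. z < t}" "u < v"
    then show "enum S u < enum S v" using mono Dt by simp
  qed
  then show ?thesis using ta oiso_iff by blast
qed



lemma img_final:
  assumes k: "isoon k {z. g \<le> z \<and> z < a} {z. z < (p::'a::wellorder)}"
    and "g \<le> g'" "g' < (a::'a)"
  shows "k ` {z. g' \<le> z \<and> z < a} = {w. k g' \<le> w \<and> w < p}"
proof
  have im: "k ` {z. g \<le> z \<and> z < a} = {z. z < p}" using isoon_image[OF k] .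
  show "k ` {z. g' \<le> z \<and> z < a} \<subseteq> {w. k g' \<le> w \<and> w < p}"
  proof
    fix w assume "w \<in> k ` {z. g' \<le> z \<and> z < a}"
    then obtain v where v: "g' \<le> v" "v < a" "w = k v" by blast
    have "k g' \<le> k v" using isoon_le_iff[OF k, of g' v] v assms by auto
    moreover have "k v < p" using im v assms by auto
    ultimately show "w \<in> {w. k g' \<le> w \<and> w < p}" using v by simp
  qed
  show "{w. k g' \<le> w \<and> w < p} \<subseteq> k ` {z. g' \<le> z \<and> z < a}"
  proof
    fix w assume w: "w \<in> {w. k g' \<le> w \<and> w < p}"
    then have "w \<in> k ` {z. g \<le> z \<and> z < a}" using im by simp
    then obtain v where v: "g \<le> v" "v < a" "w = k v" by blast
    have "g' \<le> v" using isoon_le_iff[OF k, of g' v] v assms w by auto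
    then show "w \<in> k ` {z. g' \<le> z \<and> z < a}" using v by blast
  qed
qed

lemma img_init:
  assumes k: "isoon k {z. g \<le> z \<and> z < a} {z. z < (p::'a::wellorder)}"
    and "g \<le> c" "c < (a::'a)"
  shows "k ` {z. g \<le> z \<and> z < c} = {w. w < k c}"
proof
  have im: "k ` {z. g \<le> z \<and> z < a} = {z. z < p}" using isoon_image[OF k] .
  show "k ` {z. g \<le> z \<and> z < c} \<subseteq> {w. w < k c}"
    using isoon_less_iff[OF k] assms by auto
  show "{w. w < k c} \<subseteq> k ` {z. g \<le> z \<and> z < c}"
  proof
    fix w assume w: "w \<in> {w. w < k c}"
    have "k c < p" using im assms by auto
    then have "w \<in> k ` {z. g \<le> z \<and> z < a}" using im w by simp
    then obtain v where v: "g \<le> v" "v < a" "w = k v" by blast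
    have "v < c" using isoon_less_iff[OF k, of v c] v assms w by auto
    then show "w \<in> k ` {z. g \<le> z \<and> z < c}" using v by blast
  qed
qed

lemma img_init2:
  assumes h: "isoon h {z. z < b} {q. addprin q \<and> q < (p::'a::wellorder)}"
    and "\<beta> < (b::'b::wellorder)"
  shows "h ` {z. z < \<beta>} = {q. addprin q \<and> q < h \<beta>}"
proof
  have im: "h ` {z. z < b} = {q. addprin q \<and> q < p}" using isoon_image[OF h] .
  show "h ` {z. z < \<beta>} \<subseteq> {q. addprin q \<and> q < h \<beta>}"
  proof
    fix w assume "w \<in> h ` {z. z < \<beta>}"
    then obtain v where v: "v < \<beta>" "w = h v" by blast
    have "h v < h \<beta>" using isoon_less_iff[OF h, of v \<beta>] v assms by auto
    moreover have "addprin (h v)" using im v assms by auto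
    ultimately show "w \<in> {q. addprin q \<and> q < h \<beta>}" using v by simp
  qed
  show "{q. addprin q \<and> q < h \<beta>} \<subseteq> h ` {z. z < \<beta>}"
  proof
    fix w assume w: "w \<in> {q. addprin q \<and> q < h \<beta>}"
    have "h \<beta> < p" using im assms by auto
    then have "w < p" using w by auto
    then have "w \<in> h ` {z. z < b}" using im w by simp
    then obtain v where v: "v < b" "w = h v" by blast
    have "v < \<beta>" using isoon_less_iff[OF h, of v \<beta>] v assms w by auto
    then show "w \<in> h ` {z. z < \<beta>}" using v by blast
  qed
qed

definition Qrel :: "'a::wellorder \<Rightarrow> 'a \<Rightarrow> bool" where
  "Qrel a b \<longleftrightarrow> (\<exists>g (p::'a). g \<le> a \<and> addprin p \<and> oiso {z. g \<le> z \<and> z < a} {z. z < p}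
                 \<and> oiso {z. z < b} {q. addprin q \<and> q < p})"

lemma ell_Q: "a \<noteq> ozero \<Longrightarrow> ell a = (THE b. Qrel a b)"
  by (simp add: ell_def Qrel_def)

lemma p_unique_aux:
  fixes a p1 p2 :: "'a::wellorder"
  assumes "g1 \<le> g2" "g2 \<le> a" "addprin p1" "addprin p2"
    and k1: "isoon k1 {z. g1 \<le> z \<and> z < a} {z. z < p1}"
    and i2: "oiso {z. g2 \<le> z \<and> z < a} {z. z < p2}"
  shows "p1 = p2"
proof -
  have "g2 < a"
  proof (rule ccontr)
    assume "\<not> g2 < a"
    then have "{z. g2 \<le> z \<and> z < a} = {}" by auto
    moreover have "ozero \<in> {z. z < p2}" using assms(4) by (simp add: addprin_def)
    ultimately show False using i2 unfolding oiso_def bij_betw_def by auto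
  qed
  then have e: "k1 ` {z. g2 \<le> z \<and> z < a} = {w. k1 g2 \<le> w \<and> w < p1}"
    using img_final[OF k1 assms(1) \<open>g2 < a\<close>] by simp
  have "oiso {z. g2 \<le> z \<and> z < a} {w. k1 g2 \<le> w \<and> w < p1}"
    using isoon_restrict[OF k1, of "{z. g2 \<le> z \<and> z < a}"] e assms(1) oiso_iff
    by (metis (no_types, lifting) Collect_mono order_trans)
  moreover have "k1 g2 < p1"
    using isoon_image[OF k1] assms \<open>g2 < a\<close> by auto
  then have "oiso {w. k1 g2 \<le> w \<and> w < p1} {z. z < p1}"
    using assms(3) by (simp add: addprin_def)
  ultimately have "oiso {z. z < p2} {z. z < p1}"
    using i2 by (meson oiso_sym oiso_trans)
  then show ?thesis using init_unique by metis
qed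

lemma Q_unique:
  fixes a :: "'a::wellorder"
  assumes "Qrel a b1" "Qrel a b2" shows "b1 = b2"
proof -
  obtain g1 and p1 :: 'a where 1: "g1 \<le> a" "addprin p1" "oiso {z. g1 \<le> z \<and> z < a} {z. z < p1}"
    "oiso {z. z < b1} {q. addprin q \<and> q < p1}" using assms(1) unfolding Qrel_def by blast
  obtain g2 and p2 :: 'a where 2: "g2 \<le> a" "addprin p2" "oiso {z. g2 \<le> z \<and> z < a} {z. z < p2}"
    "oiso {z. z < b2} {q. addprin q \<and> q < p2}" using assms(2) unfolding Qrel_def by blast
  have "p1 = p2"
  proof (cases "g1 \<le> g2")
    case True
    obtain k1 where "isoon k1 {z. g1 \<le> z \<and> z < a} {z. z < p1}" using 1 oiso_iff by blast
    then show ?thesis using p_unique_aux[OF True 2(1) 1(2) 2(2)] 2(3) by blast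
  next
    case False
    obtain k2 where "isoon k2 {z. g2 \<le> z \<and> z < a} {z. z < p2}" using 2 oiso_iff by blast
    then show ?thesis using p_unique_aux[of g2 g1 a p2 p1] False 1 2 by auto
  qed
  then have "oiso {z. z < b1} {z. z < b2}" using 1(4) 2(4) by (meson oiso_sym oiso_trans)
  then show ?thesis using init_unique by metis
qed

lemma Q_exists:
  fixes a :: "'a::wellorder"
  assumes a: "a \<noteq> ozero"
  shows "\<exists>b. Qrel a b"
proof -
  define T :: "'a set" where "T = {t. \<exists>g. g < a \<and> oiso {z. g \<le> z \<and> z < a} {z. z < t}}"
  have "\<exists>t. t \<in> T"
  proof -
    have "{z. ozero \<le> z \<and> z < a} \<subseteq> {z. z < a}" by auto
    then obtain t :: 'a where "oiso {z. z < t} {z. ozero \<le> z \<and> z < a}" using type_exists by blast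
    then have "oiso {z. ozero \<le> z \<and> z < a} {z. z < t}" by (rule oiso_sym)
    moreover have "ozero < a" using a ozero_le by (metis order.not_eq_order_implies_strict)
    ultimately have "t \<in> T" unfolding T_def by blast
    then show ?thesis by blast
  qed
  define p where "p = (LEAST t. t \<in> T)"
  have pT: "p \<in> T" unfolding p_def using \<open>\<exists>t. t \<in> T\<close> by (rule LeastI_ex)
  then obtain g0 where g0: "g0 < a" and "oiso {z. g0 \<le> z \<and> z < a} {z. z < p}"
    unfolding T_def by blast
  then obtain k where k: "isoon k {z. g0 \<le> z \<and> z < a} {z. z < p}"
    unfolding oiso_iff by blast
  have im: "k ` {z. g0 \<le> z \<and> z < a} = {z. z < p}" using isoon_image[OF k] .
  have "addprin p"
    unfolding addprin_def
  proof (intro conjI allI impI)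
    have "k g0 < p" using im g0 by auto
    then show "ozero < p" using ozero_le le_less_trans by blast
  next
    fix u assume u: "u < p"
    then obtain u' where u': "g0 \<le> u'" "u' < a" "k u' = u" using im by (metis (mono_tags, lifting) imageE mem_Collect_eq)
    have e: "k ` {z. u' \<le> z \<and> z < a} = {w. u \<le> w \<and> w < p}"
      using img_final[OF k u'(1,2)] u'(3) by simp
    have i1: "oiso {z. u' \<le> z \<and> z < a} {w. u \<le> w \<and> w < p}"
      using isoon_restrict[OF k, of "{z. u' \<le> z \<and> z < a}"] e u'(1) oiso_iff
      by (metis (no_types, lifting) Collect_mono order_trans)
    have "{w. u \<le> w \<and> w < p} \<subseteq> {z. z < p}" by auto
    then obtain s :: 'a where s: "s \<le> p" "oiso {z. z < s} {w. u \<le> w \<and> w < p}"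
      using type_exists by blast
    have "oiso {w. u \<le> w \<and> w < p} {z. z < s}" using s(2) by (rule oiso_sym)
    with i1 have "oiso {z. u' \<le> z \<and> z < a} {z. z < s}" by (rule oiso_trans)
    then have "s \<in> T" unfolding T_def using u'(2) by blast
    then have "p \<le> s" unfolding p_def by (rule Least_le)
    then have "s = p" using s by simp
    then show "oiso {z. u \<le> z \<and> z < p} {z. z < p}" using s oiso_sym by blast
  qed
  moreover have "{q. addprin q \<and> q < p} \<subseteq> {z. z < p}" by auto
  then obtain b :: 'a where "oiso {z. z < b} {q. addprin q \<and> q < p}" using type_exists by blast
  moreover have "oiso {z. g0 \<le> z \<and> z < a} {z. z < p}" using k unfolding oiso_iff by blast
  ultimately show ?thesis unfolding Qrel_def using g0 less_imp_le by blast
qed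

lemma ell_eq: "a \<noteq> ozero \<Longrightarrow> Qrel a b \<Longrightarrow> ell a = b"
  by (simp add: ell_Q the_equality Q_unique)

lemma P_lemma:
  fixes a :: "'a::wellorder"
  assumes "\<beta> < ell a"
  shows "\<exists>c<a. ell c = \<beta>"
proof -
  have a: "a \<noteq> ozero" using assms by auto
  then obtain b where Qb: "Qrel a b" using Q_exists by blast
  then have eb: "ell a = b" using ell_eq a by blast
  obtain g and p :: 'a and k h where g: "g \<le> a" and ap: "addprin p"
    and k: "isoon k {z. g \<le> z \<and> z < a} {z. z < p}"
    and h: "isoon h {z. z < b} {q. addprin q \<and> q < p}"
    using Qb unfolding Qrel_def oiso_iff by blast
  have \<beta>b: "\<beta> < b" using assms eb by simp
  define q where "q = h \<beta>"
  have q: "addprin q" "q < p" using isoon_image[OF h] \<beta>b unfolding q_def by auto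
  then obtain c where c: "g \<le> c" "c < a" "k c = q" using isoon_image[OF k]
    by (metis (mono_tags, lifting) imageE mem_Collect_eq)
  have e1: "k ` {z. g \<le> z \<and> z < c} = {w. w < q}" using img_init[OF k c(1,2)] c(3) by simp
  have i1: "oiso {z. g \<le> z \<and> z < c} {w. w < q}"
    using isoon_restrict[OF k, of "{z. g \<le> z \<and> z < c}"] e1 c oiso_iff
    by (metis (no_types, lifting) Collect_mono order.strict_trans)
  have e2: "h ` {z. z < \<beta>} = {q'. addprin q' \<and> q' < q}" using img_init2[OF h \<beta>b] q_def by simp
  have i2: "oiso {z. z < \<beta>} {q'. addprin q' \<and> q' < q}"
    using isoon_restrict[OF h, of "{z. z < \<beta>}"] e2 \<beta>b oiso_iff
    by (metis (no_types, lifting) Collect_mono order.strict_trans)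
  have Qc: "Qrel c \<beta>" unfolding Qrel_def using c(1) q(1) i1 i2 by blast
  have "c \<noteq> ozero"
  proof
    assume "c = ozero"
    then have "{z. g \<le> z \<and> z < c} = {}" by auto
    moreover have "ozero \<in> {w. w < q}" using q(1) by (simp add: addprin_def)
    ultimately show False using i1 unfolding oiso_def bij_betw_def by auto
  qed
  then have "ell c = \<beta>" using ell_eq Qc by blast
  then show ?thesis using c by blast
qed



lemma lseq_zero_prop:
  assumes "lseq x" "x m = ozero" "m \<le> k" shows "x k = ozero"
  using assms(3)
proof (induction k rule: dec_induct)
  case base then show ?case using assms(2) .
next
  case (step i)
  have "x (Suc i) \<le> ell (x i)" using assms(1) lseq_def by blast
  then show ?case using step.IH by (simp add: order_antisym)
qed

lemma SrelPow_bound: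
  "\<alpha> \<noteq> ozero \<Longrightarrow> SrelPow n \<alpha> x y \<Longrightarrow> \<alpha> \<le> x n"
proof (induction \<alpha> arbitrary: x y rule: less_induct)
  case (less \<alpha>)
  have "\<beta> < x n" if b: "\<beta> < \<alpha>" for \<beta>
  proof -
    obtain z where z: "z \<in> Hset" "Srel n x z" "SrelPow n \<beta> z y"
      using less.prems b SrelPow_eq[of n \<alpha> x y] by auto
    have zx: "z n < x n" using z(2) unfolding Srel_def by simp
    show ?thesis
    proof (cases "\<beta> = ozero")
      case True then show ?thesis using zx ozero_le le_less_trans by metis
    next
      case False
      have "\<beta> \<le> z n" using less.IH[OF b False z(3)] .
      then show ?thesis using zx by simp
    qed
  qed
  then show ?case using not_le by blast
qed

lemma build_chain:
  assumes "lseq x"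
  shows "\<beta> < x n \<Longrightarrow> \<exists>w. (\<forall>m\<le>n. w m < x m) \<and> w n = \<beta> \<and> (\<forall>i<n. w (Suc i) \<le> ell (w i))"
proof (induction n arbitrary: \<beta>)
  case 0
  then show ?case by (intro exI[of _ "\<lambda>_. \<beta>"]) auto
next
  case (Suc n)
  have "\<beta> < ell (x n)" using Suc.prems assms lseq_def by (metis less_le_trans)
  then obtain c where c: "c < x n" "ell c = \<beta>" using P_lemma by blast
  obtain w where w: "\<forall>m\<le>n. w m < x m" "w n = c" "\<forall>i<n. w (Suc i) \<le> ell (w i)"
    using Suc.IH[OF c(1)] by blast
  define w' where "w' = w(Suc n := \<beta>)"
  have "\<forall>m\<le>Suc n. w' m < x m" using w(1) Suc.prems unfolding w'_def by (auto simp: le_Suc_eq)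
  moreover have "w' (Suc n) = \<beta>" unfolding w'_def by simp
  moreover have "\<forall>i<Suc n. w' (Suc i) \<le> ell (w' i)"
    using w c unfolding w'_def by (auto simp: less_Suc_eq)
  ultimately show ?case by blast
qed

definition zseq :: "nat \<Rightarrow> 'a::wellorder" where "zseq = (\<lambda>_. ozero)"

lemma zseq_H: "zseq \<in> Hset"
  unfolding Hset_def lseq_def zseq_def by simp

lemma SrelPow_zero:
  assumes "x \<in> Hset" "\<alpha> \<noteq> ozero" "\<alpha> \<le> x n"
  shows "SrelPow n \<alpha> x zseq"
  using assms
proof (induction \<alpha> arbitrary: x rule: less_induct)
  case (less \<alpha>)
  have lx: "lseq x" using less.prems(1) Hset_def by blast
  show ?case
    unfolding SrelPow_eq[of n \<alpha>] using less.prems(2)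
  proof (simp, intro allI impI)
    fix \<beta> assume b: "\<beta> < \<alpha>"
    show "\<exists>z\<in>Hset. Srel n x z \<and> SrelPow n \<beta> z zseq"
    proof (cases "\<beta> = ozero")
      case True
      have "x m \<noteq> ozero" if "m \<le> n" for m
      proof
        assume "x m = ozero"
        then have "x n = ozero" using lseq_zero_prop[OF lx _ that] by simp
        then show False using less.prems(2,3) ozero_le by (metis order_antisym)
      qed
      then have "Srel n x zseq" unfolding Srel_def zseq_def
        using ozero_le by (metis order.not_eq_order_implies_strict)
      moreover have "SrelPow n \<beta> zseq zseq" using True SrelPow_eq by metis
      ultimately show ?thesis using zseq_H by blast
    next
      case False
      have "\<beta> < x n" using b less.prems(3) by simp
      then obtain w where w: "\<forall>m\<le>n. w m < x m" "w n = \<beta>" "\<forall>i<n. w (Suc i) \<le> ell (w i)"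
        using build_chain[OF lx] by blast
      define z where "z = (\<lambda>i. if i \<le> n then w i else ozero)"
      have "lseq z" unfolding lseq_def z_def using w(3) by (auto simp: not_le)
      moreover have "z (Suc n) = ozero" unfolding z_def by simp
      ultimately have zH: "z \<in> Hset" unfolding Hset_def by blast
      have "Srel n x z" unfolding Srel_def z_def using w(1) by auto
      moreover have "SrelPow n \<beta> z zseq"
        using less.IH[OF b zH False] w(2) unfolding z_def by simp
      ultimately show ?thesis using zH by blast
    qed
  qed
qed

fun phi_of :: "(nat \<Rightarrow> 'a::wellorder) \<Rightarrow> nat \<Rightarrow> 'a fm" where
  "phi_of x 0 = Top"
| "phi_of x (Suc k) = Conj (Dia k (x k) Top) (phi_of x k)"

lemma forces_phi_of: "forces y (phi_of x k) \<longleftrightarrow> (\<forall>n<k. forces y (Dia n (x n) Top))"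
  by (induction k) (auto simp: less_Suc_eq)

theorem theorem6p3:
  fixes x :: "nat \<Rightarrow> 'a::wellorder"
  assumes "countable (UNIV :: 'a set)"
    and "eps_number_type TYPE('a)"
    and "x \<in> Hset"
  shows "\<exists>\<phi>. forces x \<phi> \<and> (\<forall>y\<in>down x. \<not> forces y \<phi>)"
proof -
  have lx: "lseq x" using assms(3) Hset_def by blast
  obtain N where N: "x N = ozero" using assms(3) Hset_def by blast
  have "forces x (Dia n (x n) Top)" for n
  proof (cases "x n = ozero")
    case True
    then have "SrelPow n (x n) x x" using SrelPow_eq by metis
    then show ?thesis using assms(3) by auto
  next
    case False
    then have "SrelPow n (x n) x zseq" using SrelPow_zero[OF assms(3)] by simp
    then show ?thesis using zseq_H by auto
  qed
  then have "forces x (phi_of x N)" using forces_phi_of by blast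
  moreover have "\<not> forces y (phi_of x N)" if y: "y \<in> down x" for y
  proof
    assume f: "forces y (phi_of x N)"
    obtain j where j: "y j < x j" using y down_def by blast
    have xj: "x j \<noteq> ozero" using j by (metis not_less_ozero)
    have "j < N"
    proof (rule ccontr)
      assume "\<not> j < N"
      then have "x j = ozero" using lseq_zero_prop[OF lx N] by simp
      then show False using xj by simp
    qed
    then have "forces y (Dia j (x j) Top)" using f forces_phi_of by blast
    then obtain w where "SrelPow j (x j) y w" by auto
    then have "x j \<le> y j" using SrelPow_bound xj by blast
    then show False using j by simp
  qed
  ultimately show ?thesis by blast
qed

end
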